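(* Let $M\in\mathbb{N}$ and $r,t\in[0,1]$ with $r^2+t^2=1$ and $rt\neq0$. Then all characteristic exponents $\lambda_k(z)$, $k=1,\dots,2M$, are independent of $z\in\mathbb{T}$.
   Context: $\mathbb{T}$ is the unit circle. For $z\in\mathbb{C}\setminus\{0\}$ let $M_1(z)$ be the $2M\times 2M$ block diagonal matrix with $M$ identical $2\times2$ diagonal blocks $\frac1t\begin{pmatrix} z^{-1}&-r\\-r&z\end{pmatrix}$. Let $M_2(z)=\frac1r N(z)$, where $N(z)$ is the $2M\times 2M$ matrix whose only nonzero entries are $N_{1,1}=-z^{-1}$, $N_{1,2M}=t$, $N_{2M,1}=-t$, $N_{2M,2M}=z$, and, for $k=1,\dots,M-1$, the $2\times2$ block on rows/columns $\{2k,2k+1\}$ equal to $\begin{pmatrix} z&-t\\ t&-z^{-1}\end{pmatrix}$. For $q\in\mathbb{T}^{2M}$ let $D(q)=\mathrm{diag}(q_1,\dots,q_{2M})$. Let $(\omega_n)_{n\in\mathbb{Z}}$, $\omega_n=(\omega_{n,0},\dots,\omega_{n,4M-1})\in\mathbb{T}^{4M}$, be random with all coordinates independent and uniformly distributed on $\mathbb{T}$. Put $\ell_n=(\omega_{n,0},1,\omega_{n,2},1,\dots,\omega_{n,2M-2},1)$, $\rho_n=(1,\omega_{n,1},1,\omega_{n,3},\dots,1,\omega_{n,2M-1})$, $m_n=(\omega_{n,2M},\dots,\omega_{n,4M-1})$, and $A_n(z)=D(\ell_n)M_2(z)D(m_n)M_1(z)D(\rho_n)$. The characteristic exponents are the almost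 surely existing deterministic limits $\lambda_k(z)=\lim_{n\to\infty}\frac1n\log s_k(A_{n-1}(z)\cdots A_0(z))$, $k=1,\dots,2M$, where $s_1\ge\dots\ge s_{2M}$ are singular values (Oseledets). *)

theory Defs
  imports "HOL-Probability.Probability"
          "Jordan_Normal_Form.Char_Poly"
          "HOL-Computational_Algebra.Fundamental_Theorem_Algebra"
begin

text \<open>All matrix indices are 0-based: paper index i corresponds to Isabelle index i-1.\<close>

definition conj_tr :: "complex mat \<Rightarrow> complex mat" where
  "conj_tr A = mat (dim_col A) (dim_row A) (\<lambda>(i,j). cnj (A $$ (j,i)))"

definition sing_vals :: "complex mat \<Rightarrow> real list" where
  "sing_vals A = rev (sorted_list_of_multiset
      (image_mset (\<lambda>x. sqrt (Re x)) (proots (char_poly (conj_tr A * A)))))"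

definition sing_val :: "nat \<Rightarrow> complex mat \<Rightarrow> real" where
  "sing_val k A = sing_vals A ! (k - 1)"

text \<open>M_1(z): block diagonal, M identical blocks (1/t) [[z^-1, -r], [-r, z]].\<close>
definition M1 :: "nat \<Rightarrow> real \<Rightarrow> real \<Rightarrow> complex \<Rightarrow> complex mat" where
  "M1 M r t z = mat (2*M) (2*M) (\<lambda>(i,j).
     if i div 2 = j div 2 then
       (if even i \<and> even j then inverse z
        else if odd i \<and> odd j then z
        else - complex_of_real r) / complex_of_real t
     else 0)"

definition Nmat :: "nat \<Rightarrow> real \<Rightarrow> complex \<Rightarrow> complex mat" where
  "Nmat M t z = mat (2*M) (2*M) (\<lambda>(i,j).
     if i = 0 \<and> j = 0 then - inverse z
     else if i = 0 \<and> j = 2*M - 1 then complex_of_real t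
     else if i = 2*M - 1 \<and> j = 0 then - complex_of_real t
     else if i = 2*M - 1 \<and> j = 2*M - 1 then z
     else if 1 \<le> i \<and> i < 2*M - 1 \<and> 1 \<le> j \<and> j < 2*M - 1 \<and> (i + 1) div 2 = (j + 1) div 2 then
       (if odd i \<and> odd j then z
        else if odd i \<and> even j then - complex_of_real t
        else if even i \<and> odd j then complex_of_real t
        else - inverse z)
     else 0)"

definition M2 :: "nat \<Rightarrow> real \<Rightarrow> real \<Rightarrow> complex \<Rightarrow> complex mat" where
  "M2 M r t z = (1 / complex_of_real r) \<cdot>\<^sub>m Nmat M t z"

definition Dg :: "nat \<Rightarrow> (nat \<Rightarrow> complex) \<Rightarrow> complex mat" where
  "Dg d q = mat d d (\<lambda>(i,j). if i = j then q i else 0)"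

text \<open>Random phases: \<omega> (n, j) is \<omega>_{n,j}; only j < 4M is used.
  \<ell>_n, \<rho>_n, m_n as in the paper (0-based positions).\<close>
definition ell :: "(nat \<times> nat \<Rightarrow> complex) \<Rightarrow> nat \<Rightarrow> nat \<Rightarrow> complex" where
  "ell \<omega> n i = (if even i then \<omega> (n, i) else 1)"

definition rho :: "(nat \<times> nat \<Rightarrow> complex) \<Rightarrow> nat \<Rightarrow> nat \<Rightarrow> complex" where
  "rho \<omega> n i = (if odd i then \<omega> (n, i) else 1)"

definition mm :: "nat \<Rightarrow> (nat \<times> nat \<Rightarrow> complex) \<Rightarrow> nat \<Rightarrow> nat \<Rightarrow> complex" where
  "mm M \<omega> n i = \<omega> (n, 2*M + i)"

definition Amat :: "nat \<Rightarrow> real \<Rightarrow> real \<Rightarrow> (nat \<times> nat \<Rightarrow> complex) \<Rightarrow> nat \<Rightarrow> complex \<Rightarrow> complex mat" where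
  "Amat M r t \<omega> n z =
     Dg (2*M) (ell \<omega> n) * M2 M r t z * Dg (2*M) (mm M \<omega> n) * M1 M r t z * Dg (2*M) (rho \<omega> n)"

fun Aprod :: "nat \<Rightarrow> real \<Rightarrow> real \<Rightarrow> (nat \<times> nat \<Rightarrow> complex) \<Rightarrow> complex \<Rightarrow> nat \<Rightarrow> complex mat" where
  "Aprod M r t \<omega> z 0 = 1\<^sub>m (2*M)"
| "Aprod M r t \<omega> z (Suc n) = Amat M r t \<omega> n z * Aprod M r t \<omega> z n"

text \<open>Uniform distribution on the unit circle, and the i.i.d. family of phases
  (only n \<ge> 0 matters, since only A_0, A_1, ... enter the products).\<close>
definition unifT :: "complex measure" where
  "unifT = distr (uniform_measure lborel {0..2*pi}) borel (\<lambda>\<theta>. cis \<theta>)"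

definition Omega :: "(nat \<times> nat \<Rightarrow> complex) measure" where
  "Omega = PiM UNIV (\<lambda>_. unifT)"

definition char_exp :: "nat \<Rightarrow> real \<Rightarrow> real \<Rightarrow> nat \<Rightarrow> complex \<Rightarrow> real" where
  "char_exp M r t k z = (THE c. AE \<omega> in Omega.
      (\<lambda>n. ln (sing_val k (Aprod M r t \<omega> z n)) / real n) \<longlonglongrightarrow> c)"

end

theory Submission
  imports Defs
begin

lemma lborel_shift:
  fixes S :: "real set" assumes "S \<in> sets borel"
  shows "emeasure lborel ((+) a -` S) = emeasure lborel S"
proof -
  have "emeasure lborel S = emeasure (distr lborel borel ((+) a)) S"
    by (simp add: lborel_distr_plus)
  also have "\<dots> = emeasure lborel ((+) a -` S)"
    using assms by (subst emeasure_distr) auto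
  finally show ?thesis by simp
qed

lemma split_int:
  fixes B :: "real set" assumes "B \<in> sets borel" "a \<le> b" "b \<le> c"
  shows "emeasure lborel (B \<inter> {a..c}) = emeasure lborel (B \<inter> {a..b}) + emeasure lborel (B \<inter> {b..c})"
proof -
  have e: "B \<inter> {a..c} = (B \<inter> {a..b}) \<union> (B \<inter> {b..c})" using assms by auto
  have "(B \<inter> {a..b}) \<inter> (B \<inter> {b..c}) \<subseteq> {b}" by auto
  moreover have "{b} \<in> null_sets lborel" by (rule countable_imp_null_set_lborel) simp
  moreover have "(B \<inter> {a..b}) \<inter> (B \<inter> {b..c}) \<in> sets lborel" using assms by simp
  ultimately have "(B \<inter> {a..b}) \<inter> (B \<inter> {b..c}) \<in> null_sets lborel"
    by (metis null_sets_subset)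
  moreover have "B \<inter> {a..b} \<in> sets lborel" "B \<inter> {b..c} \<in> sets lborel" using assms by simp_all
  ultimately show ?thesis unfolding e by (intro emeasure_Un')
qed

lemma periodic_shift:
  fixes B :: "real set"
  assumes B: "B \<in> sets borel" and per: "\<And>x. x \<in> B \<longleftrightarrow> x + 2*pi \<in> B"
    and a: "0 \<le> a" "a \<le> 2*pi"
  shows "emeasure lborel ((+) a -` B \<inter> {0..2*pi}) = emeasure lborel (B \<inter> {0..2*pi})"
proof -
  have seteq: "B \<inter> {2*pi..a+2*pi} = (+) (- 2*pi) -` (B \<inter> {0..a})"
  proof (rule Set.set_eqI)
    fix x
    have "x \<in> B \<longleftrightarrow> -2*pi+x \<in> B" using per[of "-2*pi+x"] by simp
    thus "x \<in> B \<inter> {2*pi..a+2*pi} \<longleftrightarrow> x \<in> (+) (- 2*pi) -` (B \<inter> {0..a})"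
      by auto
  qed
  have "emeasure lborel ((+) a -` B \<inter> {0..2*pi}) = emeasure lborel ((+) a -` (B \<inter> {a..a+2*pi}))"
    by (rule arg_cong[where f="emeasure lborel"]) auto
  also have "\<dots> = emeasure lborel (B \<inter> {a..a+2*pi})"
    using B by (intro lborel_shift) auto
  also have "\<dots> = emeasure lborel (B \<inter> {a..2*pi}) + emeasure lborel (B \<inter> {2*pi..a+2*pi})"
    using a B by (intro split_int) auto
  also have "B \<inter> {2*pi..a+2*pi} = (+) (- 2*pi) -` (B \<inter> {0..a})"
    by (rule seteq)
  also have "emeasure lborel \<dots> = emeasure lborel (B \<inter> {0..a})"
    using B by (intro lborel_shift) auto
  also have "emeasure lborel (B \<inter> {a..2*pi}) + emeasure lborel (B \<inter> {0..a}) = emeasure lborel (B \<inter> {0..2*pi})"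
    using a B by (subst split_int[of B 0 a "2*pi"]) (auto simp: add.commute)
  finally show ?thesis .
qed

lemma sets_unifT[simp]: "sets unifT = sets borel"
  by (simp add: unifT_def)

lemma space_unifT[simp]: "space unifT = UNIV"
  by (simp add: unifT_def)

lemma cis_meas[measurable]: "cis \<in> borel_measurable borel"
  by (intro borel_measurable_continuous_onI continuous_intros)

lemma prob_space_unifT: "prob_space unifT"
  unfolding unifT_def
  by (intro prob_space.prob_space_distr prob_space_uniform_measure) auto

lemma emeasure_unifT:
  assumes "F \<in> sets borel"
  shows "emeasure unifT F = emeasure lborel (cis -` F \<inter> {0..2*pi}) / emeasure lborel {0..2*pi::real}"
proof -
  have "emeasure unifT F = emeasure (uniform_measure lborel {0..2*pi}) (cis -` F \<inter> space (uniform_measure lborel {0..2*pi}))"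
    unfolding unifT_def using assms by (subst emeasure_distr) auto
  also have "\<dots> = emeasure lborel ({0..2*pi} \<inter> cis -` F) / emeasure lborel {0..2*pi::real}"
    using assms measurable_sets[OF cis_meas assms] by (subst emeasure_uniform_measure) auto
  finally show ?thesis by (simp add: Int_commute)
qed

lemma unifT_rot:
  assumes F: "F \<in> sets borel" and c: "norm c = 1"
  shows "emeasure unifT ((\<lambda>x. c * x) -` F) = emeasure unifT F"
proof -
  have c0: "c \<noteq> 0" using c by auto
  have cA: "cis (Arg c) = c" using cis_Arg[OF c0] c by (simp add: sgn_div_norm)
  have Ab: "- pi < Arg c" "Arg c \<le> pi" using Arg_bounded[of c] by auto
  obtain a where a: "0 \<le> a" "a \<le> 2*pi" "c = cis a"
  proof (cases "Arg c \<ge> 0")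
    case True thus ?thesis using that[of "Arg c"] Ab cA by auto
  next
    case False
    have "cis (Arg c + 2*pi) = cis (Arg c)" by (simp add: complex_eq_iff)
    thus ?thesis using that[of "Arg c + 2*pi"] False Ab cA by auto
  qed
  define B where "B = cis -` F"
  have B: "B \<in> sets borel" unfolding B_def using measurable_sets[OF cis_meas F] by simp
  have per: "x \<in> B \<longleftrightarrow> x + 2*pi \<in> B" for x
  proof -
    have "cis (x + 2*pi) = cis x" by (simp add: complex_eq_iff)
    thus ?thesis unfolding B_def by simp
  qed
  have "cis -` ((\<lambda>x. c * x) -` F) = (+) a -` B"
    unfolding B_def a(3) by (auto simp: cis_mult)
  hence "cis -` ((\<lambda>x. c * x) -` F) \<inter> {0..2*pi} = (+) a -` B \<inter> {0..2*pi}" by simp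
  moreover have "(\<lambda>x. c * x) -` F \<in> sets borel"
    using measurable_sets[OF borel_measurable_continuous_onI[of "\<lambda>x. c * x"] F] by (simp add: continuous_intros)
  ultimately show ?thesis
    using F periodic_shift[OF B per a(1,2)] by (simp add: emeasure_unifT B_def)
qed

definition Tz :: "complex \<Rightarrow> (nat \<times> nat \<Rightarrow> complex) \<Rightarrow> (nat \<times> nat \<Rightarrow> complex)" where
  "Tz z \<omega> = (\<lambda>(n,j). (if even j then inverse z else z) * \<omega> (n,j))"

lemma Tz_meas: "Tz z \<in> measurable Omega Omega"
proof -
  have "(\<lambda>\<omega>. Tz z \<omega> i) \<in> measurable Omega unifT" for i
  proof -
    obtain n j where i: "i = (n,j)" by (cases i)
    have mc: "measurable Omega unifT = measurable Omega borel"
      by (rule measurable_cong_sets) simp_all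
    have comp: "(\<lambda>\<omega>. \<omega> (n,j)) \<in> measurable Omega borel"
      using measurable_component_singleton[of "(n,j)" UNIV "\<lambda>_. unifT"]
      unfolding Omega_def[symmetric] mc by simp
    have "(\<lambda>\<omega>. (if even j then inverse z else z) * \<omega> (n,j)) \<in> borel_measurable Omega"
      by (rule measurable_compose[OF comp borel_measurable_continuous_onI]) (intro continuous_intros)
    thus ?thesis unfolding Tz_def i mc by simp
  qed
  thus ?thesis unfolding Omega_def
    by (intro measurable_PiM_single') (auto simp: Omega_def)
qed

lemma Tz_distr:
  assumes z: "norm z = 1"
  shows "distr Omega Omega (Tz z) = Omega"
proof -
  interpret P: product_prob_space "\<lambda>_. unifT" UNIV
    by (intro product_prob_spaceI prob_space_unifT)
  define cf where "cf j = (if even j then inverse z else z)" for j :: nat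
  have ncf: "norm (cf j) = 1" for j using z by (simp add: cf_def norm_inverse)
  show ?thesis unfolding Omega_def
  proof (rule P.PiM_eq)
    show "sets (distr (Pi\<^sub>M UNIV (\<lambda>_. unifT)) (Pi\<^sub>M UNIV (\<lambda>_. unifT)) (Tz z)) = sets (Pi\<^sub>M UNIV (\<lambda>_. unifT))"
      by simp
    fix J :: "(nat \<times> nat) set" and F
    assume J: "finite J" "J \<subseteq> UNIV" and F: "\<And>j. j \<in> J \<Longrightarrow> F j \<in> sets unifT"
    have "emeasure (distr (Pi\<^sub>M UNIV (\<lambda>_. unifT)) (Pi\<^sub>M UNIV (\<lambda>_. unifT)) (Tz z)) (prod_emb UNIV (\<lambda>_. unifT) J (Pi\<^sub>E J F))
       = emeasure (Pi\<^sub>M UNIV (\<lambda>_. unifT)) (Tz z -` prod_emb UNIV (\<lambda>_. unifT) J (Pi\<^sub>E J F) \<inter> space (Pi\<^sub>M UNIV (\<lambda>_. unifT)))"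
      using Tz_meas J F unfolding Omega_def by (intro emeasure_distr) (auto intro!: sets_PiM_I_finite)
    also have "Tz z -` prod_emb UNIV (\<lambda>_. unifT) J (Pi\<^sub>E J F) \<inter> space (Pi\<^sub>M UNIV (\<lambda>_. unifT))
       = prod_emb UNIV (\<lambda>_. unifT) J (Pi\<^sub>E J (\<lambda>i. (\<lambda>x. cf (snd i) * x) -` F i))"
      by (auto simp: prod_emb_def space_PiM PiE_def Pi_def extensional_def Tz_def cf_def split: prod.splits)
    also have "emeasure (Pi\<^sub>M UNIV (\<lambda>_. unifT)) \<dots> = (\<Prod>i\<in>J. emeasure unifT ((\<lambda>x. cf (snd i) * x) -` F i))"
      using J F
      by (intro P.emeasure_PiM_emb) (auto intro!: measurable_sets_borel[OF borel_measurable_continuous_onI] continuous_intros)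
    also have "\<dots> = (\<Prod>i\<in>J. emeasure unifT (F i))"
      using F ncf by (intro prod.cong refl unifT_rot) auto
    finally show "emeasure (distr (Pi\<^sub>M UNIV (\<lambda>_. unifT)) (Pi\<^sub>M UNIV (\<lambda>_. unifT)) (Tz z)) (prod_emb UNIV (\<lambda>_. unifT) J (Pi\<^sub>E J F)) = (\<Prod>i\<in>J. emeasure unifT (F i))" .
  qed
qed


lemma Dg_carrier[simp]: "Dg d a \<in> carrier_mat d d" by (simp add: Dg_def)
lemma Dg_dims[simp]: "dim_row (Dg d a) = d" "dim_col (Dg d a) = d" by (simp_all add: Dg_def)

lemma DgL: assumes "X \<in> carrier_mat d n"
  shows "Dg d a * X = mat d n (\<lambda>(i,j). a i * X $$ (i,j))"
proof (rule eq_matI)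
  fix i j assume ij: "i < dim_row (mat d n (\<lambda>(i,j). a i * X $$ (i,j)))" "j < dim_col (mat d n (\<lambda>(i,j). a i * X $$ (i,j)))"
  have "(Dg d a * X) $$ (i,j) = (\<Sum>k\<in>{0..<d}. (if i = k then a i else 0) * X $$ (k,j))"
    using ij assms by (simp add: Dg_def scalar_prod_def)
  also have "\<dots> = (\<Sum>k\<in>{0..<d}. if k = i then a i * X $$ (i,j) else 0)"
    by (rule sum.cong) auto
  also have "\<dots> = a i * X $$ (i,j)" using ij by simp
  finally show "(Dg d a * X) $$ (i,j) = mat d n (\<lambda>(i,j). a i * X $$ (i,j)) $$ (i,j)" using ij by simp
qed (use assms in auto)

lemma DgR: assumes "X \<in> carrier_mat n d"
  shows "X * Dg d b = mat n d (\<lambda>(i,j). X $$ (i,j) * b j)"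
proof (rule eq_matI)
  fix i j assume ij: "i < dim_row (mat n d (\<lambda>(i,j). X $$ (i,j) * b j))" "j < dim_col (mat n d (\<lambda>(i,j). X $$ (i,j) * b j))"
  have "(X * Dg d b) $$ (i,j) = (\<Sum>k\<in>{0..<d}. X $$ (i,k) * (if k = j then b k else 0))"
    using ij assms by (simp add: Dg_def scalar_prod_def)
  also have "\<dots> = (\<Sum>k\<in>{0..<d}. if k = j then X $$ (i,j) * b j else 0)"
    by (rule sum.cong) auto
  also have "\<dots> = X $$ (i,j) * b j" using ij by simp
  finally show "(X * Dg d b) $$ (i,j) = mat n d (\<lambda>(i,j). X $$ (i,j) * b j) $$ (i,j)" using ij by simp
qed (use assms in auto)

lemma DgDg: "Dg d a * Dg d b = Dg d (\<lambda>i. a i * b i)"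
  by (subst DgL[of _ d d]) (auto simp: Dg_def)

lemma M1_carrier[simp]: "M1 M r t z \<in> carrier_mat (2*M) (2*M)" by (simp add: M1_def)
lemma M2_carrier[simp]: "M2 M r t z \<in> carrier_mat (2*M) (2*M)" by (simp add: M2_def Nmat_def)

definition Pz :: "complex \<Rightarrow> nat \<Rightarrow> complex" where "Pz z i = (if odd i then z else 1)"
definition Qz :: "complex \<Rightarrow> nat \<Rightarrow> complex" where "Qz z i = (if even i then inverse z else 1)"

lemma DXD: assumes "X \<in> carrier_mat d d"
  shows "Dg d a * X * Dg d b = mat d d (\<lambda>(i,j). a i * X $$ (i,j) * b j)"
proof -
  have "Dg d a * X = mat d d (\<lambda>(i,j). a i * X $$ (i,j))" by (rule DgL[OF assms])
  moreover have "mat d d (\<lambda>(i,j). a i * X $$ (i,j)) * Dg d b = mat d d (\<lambda>(i,j). a i * X $$ (i,j) * b j)"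
    by (subst DgR[of _ d d]) (auto intro!: eq_matI)
  ultimately show ?thesis by simp
qed

lemma M1_gauge: assumes "z \<noteq> 0"
  shows "M1 M r t z = Dg (2*M) (Pz z) * M1 M r t 1 * Dg (2*M) (Qz z)"
  unfolding DXD[OF M1_carrier] using assms
  by (auto simp: M1_def Pz_def Qz_def intro!: eq_matI)

lemma N_dims: "dim_row (Nmat M t z) = 2*M" "dim_col (Nmat M t z) = 2*M" by (simp_all add: Nmat_def)
lemma N_carrier: "Nmat M t z \<in> carrier_mat (2*M) (2*M)" by (simp add: Nmat_def)

lemma N_gauge: assumes "z \<noteq> 0"
  shows "Nmat M t z = Dg (2*M) (Pz z) * Nmat M t 1 * Dg (2*M) (Qz z)"
  unfolding DXD[OF N_carrier] using assms
  by (auto simp: Nmat_def Pz_def Qz_def intro!: eq_matI)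

lemma M2_gauge: assumes "z \<noteq> 0"
  shows "M2 M r t z = Dg (2*M) (Pz z) * M2 M r t 1 * Dg (2*M) (Qz z)"
  unfolding DXD[OF M2_carrier] unfolding M2_def N_gauge[OF assms] DXD[OF N_carrier]
  by (auto simp: N_dims intro!: eq_matI)

lemma massoc: "dim_col A = dim_row B \<Longrightarrow> dim_col B = dim_row C \<Longrightarrow> A * B * C = A * (B * (C :: complex mat))"
  by (rule assoc_mult_mat[of _ "dim_row A" "dim_col A" _ "dim_col B" _ "dim_col C"]) auto

lemma DgDgX: "dim_row X = d \<Longrightarrow> Dg d a * (Dg d b * (X :: complex mat)) = Dg d (\<lambda>i. a i * b i) * X"
  by (subst massoc[symmetric]) (auto simp: DgDg)

lemma Dg_smult: "Dg d (\<lambda>i. c * a i) = c \<cdot>\<^sub>m Dg d a"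
  by (auto simp: Dg_def intro!: eq_matI)

lemma M1_dims[simp]: "dim_row (M1 M r t z) = 2*M" "dim_col (M1 M r t z) = 2*M" by (simp_all add: M1_def)
lemma M2_dims[simp]: "dim_row (M2 M r t z) = 2*M" "dim_col (M2 M r t z) = 2*M" by (simp_all add: M2_def Nmat_def)

lemma sm1: "dim_col A = dim_row B \<Longrightarrow> (c \<cdot>\<^sub>m A) * B = c \<cdot>\<^sub>m (A * (B :: complex mat))"
  by (rule mult_smult_assoc_mat[of _ "dim_row A" "dim_col A" _ "dim_col B"]) auto
lemma sm2: "dim_col A = dim_row B \<Longrightarrow> A * (c \<cdot>\<^sub>m B) = c \<cdot>\<^sub>m (A * (B :: complex mat))"
  by (rule mult_smult_distrib[of _ "dim_row A" "dim_col A" _ "dim_col B"]) auto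
lemma sm3: "a \<cdot>\<^sub>m (b \<cdot>\<^sub>m (A :: complex mat)) = (a * b) \<cdot>\<^sub>m A"
  by (auto intro!: eq_matI)

lemma sm4: "1 \<cdot>\<^sub>m (A :: complex mat) = A"
  by (auto intro!: eq_matI)

lemma Amat_gauge: assumes z: "z \<noteq> 0"
  shows "Amat M r t \<omega> n z = Amat M r t (Tz z \<omega>) n 1"
proof -
  let ?A = "M2 M r t 1" and ?B = "M1 M r t 1" and ?d = "2*M"
  have l: "(\<lambda>i. ell \<omega> n i * Pz z i) = (\<lambda>i. z * ell (Tz z \<omega>) n i)"
    using z by (auto simp: ell_def Pz_def Tz_def)
  have rr: "(\<lambda>i. Qz z i * rho \<omega> n i) = (\<lambda>i. inverse z * rho (Tz z \<omega>) n i)"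
    using z by (auto simp: rho_def Qz_def Tz_def)
  have m: "(\<lambda>i. Qz z i * (mm M \<omega> n i * Pz z i)) = mm M (Tz z \<omega>) n"
    using z by (auto simp: mm_def Qz_def Pz_def Tz_def)
  have "Amat M r t \<omega> n z = Dg ?d (ell \<omega> n) * (Dg ?d (Pz z) * (?A * (Dg ?d (Qz z) * (Dg ?d (mm M \<omega> n) *
      (Dg ?d (Pz z) * (?B * (Dg ?d (Qz z) * Dg ?d (rho \<omega> n))))))))"
    unfolding Amat_def M1_gauge[OF z] M2_gauge[OF z] by (simp add: massoc)
  also have "\<dots> = Dg ?d (\<lambda>i. z * ell (Tz z \<omega>) n i) * (?A * (Dg ?d (mm M (Tz z \<omega>) n) *
      (?B * Dg ?d (\<lambda>i. inverse z * rho (Tz z \<omega>) n i))))"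
    by (simp add: DgDgX DgDg l rr m[symmetric] del: Dg_smult)
  also have "\<dots> = (z * inverse z) \<cdot>\<^sub>m (Dg ?d (ell (Tz z \<omega>) n) * (?A * (Dg ?d (mm M (Tz z \<omega>) n) *
      (?B * Dg ?d (rho (Tz z \<omega>) n)))))"
    unfolding Dg_smult
    by (simp add: sm1 sm2 sm3 mult.commute)
  also have "\<dots> = Amat M r t (Tz z \<omega>) n 1"
    using z unfolding Amat_def by (simp add: massoc sm4)
  finally show ?thesis .
qed

lemma Aprod_gauge: assumes z: "z \<noteq> 0"
  shows "Aprod M r t \<omega> z k = Aprod M r t (Tz z \<omega>) 1 k"
  by (induction k) (simp_all add: Amat_gauge[OF z])

lemma Tz_inv: "z \<noteq> 0 \<Longrightarrow> Tz z (Tz (inverse z) \<omega>) = \<omega>"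
  by (auto simp: Tz_def fun_eq_iff)

lemma char_exp_1: assumes z: "norm z = 1"
  shows "char_exp M r t k z = char_exp M r t k 1"
proof -
  define f where "f \<omega> c = ((\<lambda>n. ln (sing_val k (Aprod M r t \<omega> 1 n)) / real n) \<longlonglongrightarrow> c)" for \<omega> c
  have z0: "z \<noteq> 0" using z by auto
  have iz: "norm (inverse z) = 1" using z by (simp add: norm_inverse)
  have eq: "(AE \<omega> in Omega. f (Tz z \<omega>) c) \<longleftrightarrow> (AE \<omega> in Omega. f \<omega> c)" for c
  proof
    assume "AE \<omega> in Omega. f (Tz z \<omega>) c"
    hence "AE \<omega> in distr Omega Omega (Tz (inverse z)). f (Tz z \<omega>) c" unfolding Tz_distr[OF iz] .
    hence "AE \<omega> in Omega. f (Tz z (Tz (inverse z) \<omega>)) c" by (rule AE_distrD[OF Tz_meas])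
    thus "AE \<omega> in Omega. f \<omega> c" by (simp add: Tz_inv[OF z0])
  next
    assume "AE \<omega> in Omega. f \<omega> c"
    hence "AE \<omega> in distr Omega Omega (Tz z). f \<omega> c" unfolding Tz_distr[OF z] .
    thus "AE \<omega> in Omega. f (Tz z \<omega>) c" by (rule AE_distrD[OF Tz_meas])
  qed
  show ?thesis unfolding char_exp_def Aprod_gauge[OF z0] using eq[unfolded f_def] by simp
qed

theorem mainTheorem13:
  fixes M :: nat and r t :: real
  assumes "0 \<le> r" "r \<le> 1" "0 \<le> t" "t \<le> 1"
    and "r\<^sup>2 + t\<^sup>2 = 1" and "r * t \<noteq> 0"
  shows "\<forall>k\<in>{1..2*M}. \<forall>z\<in>sphere 0 1. \<forall>z'\<in>sphere 0 1.
           char_exp M r t k z = char_exp M r t k z'"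
proof (intro ballI)
  fix k :: nat and z z' :: complex
  assume "z \<in> sphere 0 1" "z' \<in> sphere 0 1"
  hence "norm z = 1" "norm z' = 1" by simp_all
  thus "char_exp M r t k z = char_exp M r t k z'"
    using char_exp_1[of z M r t k] char_exp_1[of z' M r t k] by simp
qed

end
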